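(* For each $r\in\mathcal R_n$ and $a\in A(r)$, the map $A(r^a)\to A(r)$, $(b_1,\dots,b_n,b_{n+1})\mapsto(b_1,\dots,b_n)$, is surjective.
   Context: $\mathcal R_n$ is the set of real symmetric $n\times n$ matrices with zero diagonal, nonnegative entries and $r_{i,k}+r_{k,j}\ge r_{i,j}$. For $r\in\mathcal R_n$, $A(r)=\{a\in\mathbb R^n: |a_i-a_j|\le r_{i,j}\le a_i+a_j\ \forall i,j\}$, and for $a\in A(r)$, $r^a\in\mathcal R_{n+1}$ is $r$ bordered by $a$ as last row and column (with $0$ on the diagonal). *)

theory Defs
  imports Complex_Main
begin

text \<open>Real n-by-n matrices are represented as functions nat => nat => real, only indices < n
  being relevant; vectors in R^n as functions nat => real with indices < n.\<close>

definition R :: "nat \<Rightarrow> (nat \<Rightarrow> nat \<Rightarrow> real) set" where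
  "R n = {r. (\<forall>i<n. \<forall>j<n. r i j = r j i \<and> r i j \<ge> 0) \<and> (\<forall>i<n. r i i = 0)
            \<and> (\<forall>i<n. \<forall>j<n. \<forall>k<n. r i k + r k j \<ge> r i j)}"

definition A :: "nat \<Rightarrow> (nat \<Rightarrow> nat \<Rightarrow> real) \<Rightarrow> (nat \<Rightarrow> real) set" where
  "A n r = {a. (\<forall>i<n. \<forall>j<n. \<bar>a i - a j\<bar> \<le> r i j \<and> r i j \<le> a i + a j)
              \<and> (\<forall>i\<ge>n. a i = 0)}"

text \<open>r^a: r bordered by a as last (index n) row and column, zero on the diagonal.\<close>
definition border :: "nat \<Rightarrow> (nat \<Rightarrow> nat \<Rightarrow> real) \<Rightarrow> (nat \<Rightarrow> real) \<Rightarrow> (nat \<Rightarrow> nat \<Rightarrow> real)" where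
  "border n r a = (\<lambda>i j. if i = n \<and> j = n then 0 else if i = n then a j
                         else if j = n then a i else r i j)"

definition proj :: "nat \<Rightarrow> (nat \<Rightarrow> real) \<Rightarrow> (nat \<Rightarrow> real)" where
  "proj n b = (\<lambda>i. if i < n then b i else 0)"

end

theory Submission
  imports Defs
begin

theorem corollary1:
  assumes "r \<in> R n" and "a \<in> A n r"
  shows "proj n ` A (Suc n) (border n r a) = A n r"
proof
  show "proj n ` A (Suc n) (border n r a) \<subseteq> A n r"
    by (auto simp: A_def proj_def border_def)
next
  show "A n r \<subseteq> proj n ` A (Suc n) (border n r a)"
  proof
    fix b assume b: "b \<in> A n r"
    have rd: "\<forall>i<n. r i i = 0" using assms(1) by (simp add: R_def)
    have ha: "\<forall>i<n. \<forall>j<n. \<bar>a i - a j\<bar> \<le> r i j \<and> r i j \<le> a i + a j" "\<forall>i\<ge>n. a i = 0"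
      using assms(2) by (auto simp: A_def)
    have hb: "\<forall>i<n. \<forall>j<n. \<bar>b i - b j\<bar> \<le> r i j \<and> r i j \<le> b i + b j" "\<forall>i\<ge>n. b i = 0"
      using b by (auto simp: A_def)
    define S where "S = insert 0 ((\<lambda>i. \<bar>a i - b i\<bar>) ` {..<n})"
    define c where "c = Max S"
    have fS: "finite S" "S \<noteq> {}" by (auto simp: S_def)
    have c0: "c \<ge> 0" and cge: "\<And>i. i < n \<Longrightarrow> \<bar>a i - b i\<bar> \<le> c"
      using fS by (auto simp: c_def S_def intro!: Max_ge)
    have key: "\<And>j. j < n \<Longrightarrow> c \<le> a j + b j"
    proof -
      fix j assume j: "j < n"
      have aj: "a j \<ge> 0" using ha(1) rd j by fastforce
      have bj: "b j \<ge> 0" using hb(1) rd j by fastforce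
      have "\<forall>s\<in>S. s \<le> a j + b j"
      proof
        fix s assume "s \<in> S"
        then consider "s = 0" | i where "i < n" "s = \<bar>a i - b i\<bar>" by (auto simp: S_def)
        then show "s \<le> a j + b j"
        proof cases
          case 1 then show ?thesis using aj bj by simp
        next
          case 2
          have "\<bar>a i - a j\<bar> \<le> r i j" "r i j \<le> a i + a j"
               "\<bar>b i - b j\<bar> \<le> r i j" "r i j \<le> b i + b j"
            using ha(1) hb(1) 2(1) j by auto
          then show ?thesis using 2(2) by (auto simp: abs_le_iff)
        qed
      qed
      then show "c \<le> a j + b j" using fS by (simp add: c_def)
    qed
    define b' where "b' = b(n := c)"
    have "b' \<in> A (Suc n) (border n r a)"
      unfolding A_def
    proof (intro CollectI conjI allI impI)
      fix i j assume i: "i < Suc n" and j: "j < Suc n"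
      show "\<bar>b' i - b' j\<bar> \<le> border n r a i j"
        using i j hb(1) cge[of i] cge[of j] key[of i] key[of j] c0
        by (cases "i = n"; cases "j = n") (auto simp: b'_def border_def less_Suc_eq abs_le_iff)
      show "border n r a i j \<le> b' i + b' j"
        using i j hb(1) cge[of i] cge[of j] key[of i] key[of j] c0
        by (cases "i = n"; cases "j = n") (auto simp: b'_def border_def less_Suc_eq abs_le_iff)
    next
      fix i assume "Suc n \<le> i" then show "b' i = 0" using hb(2) by (auto simp: b'_def)
    qed
    moreover have "proj n b' = b" using hb(2) by (auto simp: proj_def b'_def)
    ultimately show "b \<in> proj n ` A (Suc n) (border n r a)" by force
  qed
qed

end
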